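(* For any $R>0$ and any finite sequence of intervals $([x_i,y_i])_{i=1}^m$ (with $x_i\le y_i$), there exists a sequence of intervals $([s_i,t_i])_{i=1}^{m'}$ with $m'\le m$ such that: each $s_i$ belongs to $\{x_1,\dots,x_m\}$ and each $t_i$ belongs to $\{y_1,\dots,y_m\}$; $\sum_{i=1}^{m'}|t_i-s_i|\le 2mR+\sum_{i=1}^m|y_i-x_i|$; $\mathrm{d}([s_i,t_i],[s_j,t_j])\ge R$ for all $1\le i\ne j\le m'$; and $\bigcup_{i=1}^m[x_i,y_i]\subset\bigcup_{i=1}^{m'}[s_i,t_i]$.
   Context: For sets $A,B\subset\mathbb{R}$, $\mathrm{d}(A,B):=\inf\{|x-y|:x\in A,y\in B\}$ is the Euclidean distance between them. *)

theory Defs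
  imports "HOL-Analysis.Analysis"
begin

end

theory Submission
  imports Defs
begin

definition sepR :: "real \<Rightarrow> real \<times> real \<Rightarrow> real \<times> real \<Rightarrow> bool" where
  "sepR R p q \<longleftrightarrow> snd p + R \<le> fst q \<or> snd q + R \<le> fst p"

lemma setdist_iv:
  fixes a b c d R :: real
  assumes "a \<le> b" "c \<le> d" "b + R \<le> c \<or> d + R \<le> a"
  shows "R \<le> setdist {a..b} {c..d}"
  apply (rule le_setdistI)
  using assms by (auto simp: dist_real_def)

lemma main:
  fixes R :: real and m :: nat and x y :: "nat \<Rightarrow> real"
  assumes "R > 0" and "\<forall>i<m. x i \<le> y i"
  shows "\<exists>P. finite P \<and> card P \<le> m \<and>
     (\<forall>p\<in>P. fst p \<in> x ` {..<m} \<and> snd p \<in> y ` {..<m} \<and> fst p \<le> snd p) \<and>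
     (\<Sum>p\<in>P. snd p - fst p) \<le> 2 * real m * R + (\<Sum>i<m. y i - x i) \<and>
     (\<forall>p\<in>P. \<forall>q\<in>P. p \<noteq> q \<longrightarrow> sepR R p q) \<and>
     (\<Union>i<m. {x i..y i}) \<subseteq> (\<Union>p\<in>P. {fst p..snd p})"
  using assms(2)
proof (induction m)
  case 0
  show ?case by (rule exI[of _ "{}"]) auto
next
  case (Suc m)
  then obtain P where fP: "finite P" and cP: "card P \<le> m"
    and rP: "\<forall>p\<in>P. fst p \<in> x ` {..<m} \<and> snd p \<in> y ` {..<m} \<and> fst p \<le> snd p"
    and sP: "(\<Sum>p\<in>P. snd p - fst p) \<le> 2 * real m * R + (\<Sum>i<m. y i - x i)"
    and pP: "\<forall>p\<in>P. \<forall>q\<in>P. p \<noteq> q \<longrightarrow> sepR R p q"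
    and uP: "(\<Union>i<m. {x i..y i}) \<subseteq> (\<Union>p\<in>P. {fst p..snd p})"
    by auto
  define a where "a = x m"
  define b where "b = y m"
  have ab: "a \<le> b" using Suc.prems a_def b_def by auto
  define M where "M = {p\<in>P. \<not> sepR R p (a,b)}"
  have fM: "finite M" using fP M_def by auto
  have MP: "M \<subseteq> P" using M_def by auto
  define s' where "s' = Min (insert a (fst ` M))"
  define t' where "t' = Max (insert b (snd ` M))"
  have s'a: "s' \<le> a" unfolding s'_def using fM by auto
  have t'b: "b \<le> t'" unfolding t'_def using fM by auto
  have s'M: "\<And>p. p \<in> M \<Longrightarrow> s' \<le> fst p" unfolding s'_def using fM by auto
  have t'M: "\<And>p. p \<in> M \<Longrightarrow> snd p \<le> t'" unfolding t'_def using fM by auto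
  have s'in: "s' = a \<or> (\<exists>p\<in>M. s' = fst p)" unfolding s'_def using fM Min_in[of "insert a (fst ` M)"] by auto
  have t'in: "t' = b \<or> (\<exists>p\<in>M. t' = snd p)" unfolding t'_def using fM Max_in[of "insert b (snd ` M)"] by auto
  have Mnear: "\<And>p. p \<in> M \<Longrightarrow> a < snd p + R \<and> fst p < b + R"
    unfolding M_def sepR_def by auto
  have lenM: "\<And>p. p \<in> M \<Longrightarrow> 0 \<le> snd p - fst p" using rP MP by auto
  have sepnew: "sepR R q (s',t')" if q: "q \<in> P - M" for q
  proof -
    have qs: "sepR R q (a,b)" using q M_def by auto
    have qle: "fst q \<le> snd q" using rP q by auto
    show ?thesis
    proof (cases "snd q + R \<le> a")
      case True
      have "snd q + R \<le> fst p" if p: "p \<in> M" for p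
      proof -
        have "p \<noteq> q" using p q by auto
        then have "sepR R q p" using pP p q MP by auto
        moreover have "a < snd p + R" using Mnear p by auto
        ultimately show ?thesis unfolding sepR_def using True qle \<open>R>0\<close> by auto
      qed
      then have "snd q + R \<le> s'" unfolding s'_def using fM True by auto
      then show ?thesis unfolding sepR_def by auto
    next
      case False
      then have bq: "b + R \<le> fst q" using qs unfolding sepR_def by auto
      have "snd p + R \<le> fst q" if p: "p \<in> M" for p
      proof -
        have "p \<noteq> q" using p q by auto
        then have "sepR R q p" using pP p q MP by auto
        moreover have "fst p < b + R" using Mnear p by auto
        ultimately show ?thesis unfolding sepR_def using bq qle \<open>R>0\<close> by auto
      qed
      then have "t' \<le> fst q - R" unfolding t'_def using fM bq by (force simp: Max_le_iff)
      then have "t' + R \<le> fst q" by simp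
      then show ?thesis unfolding sepR_def by auto
    qed
  qed
  have notin: "(s',t') \<notin> P - M"
  proof
    assume h: "(s',t') \<in> P - M"
    then have "sepR R (s',t') (s',t')" using sepnew by auto
    then show False unfolding sepR_def using s'a ab t'b \<open>R>0\<close> by auto
  qed
  define P' where "P' = insert (s',t') (P - M)"
  have fP': "finite P'" using fP P'_def by auto
  have "card P' = Suc (card (P - M))" using notin fP P'_def by auto
  also have "\<dots> \<le> Suc (card P)" using fP by (simp add: card_mono)
  finally have cP': "card P' \<le> Suc m" using cP by auto
  have rP': "\<forall>p\<in>P'. fst p \<in> x ` {..<Suc m} \<and> snd p \<in> y ` {..<Suc m} \<and> fst p \<le> snd p"
  proof
    fix p assume p: "p \<in> P'"
    show "fst p \<in> x ` {..<Suc m} \<and> snd p \<in> y ` {..<Suc m} \<and> fst p \<le> snd p"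
    proof (cases "p = (s',t')")
      case True
      have "s' \<in> x ` {..<Suc m}"
      proof (cases "s' = a")
        case True then show ?thesis using a_def by auto
      next
        case False
        then obtain p where "p \<in> M" "s' = fst p" using s'in by auto
        then have "s' \<in> x ` {..<m}" using rP MP by auto
        then show ?thesis by auto
      qed
      moreover have "t' \<in> y ` {..<Suc m}"
      proof (cases "t' = b")
        case True then show ?thesis using b_def by auto
      next
        case False
        then obtain p where "p \<in> M" "t' = snd p" using t'in by auto
        then have "t' \<in> y ` {..<m}" using rP MP by auto
        then show ?thesis by auto
      qed
      ultimately show ?thesis using True s'a ab t'b by auto
    next
      case False
      then have "p \<in> P" using p P'_def by auto
      have sub: "{..<m} \<subseteq> {..<Suc m}" by auto
      have "fst p \<in> x ` {..<m} \<and> snd p \<in> y ` {..<m} \<and> fst p \<le> snd p" using rP \<open>p \<in> P\<close> by blast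
      then show ?thesis using image_mono[OF sub, of x] image_mono[OF sub, of y] by blast
    qed
  qed
  have lennew: "t' - s' \<le> (b - a) + (\<Sum>p\<in>M. snd p - fst p) + 2 * R"
  proof -
    have S0: "0 \<le> (\<Sum>p\<in>M. snd p - fst p)" using lenM by (simp add: sum_nonneg)
    have S1: "snd p - fst p \<le> (\<Sum>p\<in>M. snd p - fst p)" if "p \<in> M" for p
      using member_le_sum[of p M "\<lambda>p. snd p - fst p"] that lenM fM by auto
    have S2: "(snd p - fst p) + (snd q - fst q) \<le> (\<Sum>p\<in>M. snd p - fst p)"
      if "p \<in> M" "q \<in> M" "p \<noteq> q" for p q
    proof -
      have "(\<Sum>p\<in>{p,q}. snd p - fst p) \<le> (\<Sum>p\<in>M. snd p - fst p)"
        using that lenM fM by (intro sum_mono2) auto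
      then show ?thesis using that by auto
    qed
    from s'in t'in show ?thesis
    proof (elim disjE bexE)
      assume "s' = a" "t' = b" then show ?thesis using S0 \<open>R>0\<close> by auto
    next
      fix p assume "s' = a" "p \<in> M" "t' = snd p"
      then show ?thesis using S1[of p] Mnear[of p] \<open>R>0\<close> by auto
    next
      fix p assume "t' = b" "p \<in> M" "s' = fst p"
      then show ?thesis using S1[of p] Mnear[of p] \<open>R>0\<close> by auto
    next
      fix p q assume "p \<in> M" "s' = fst p" "q \<in> M" "t' = snd q"
      then show ?thesis
        using S1[of p] S2[of p q] Mnear[of p] Mnear[of q] \<open>R>0\<close> ab by (cases "p = q") auto
    qed
  qed
  have "(\<Sum>p\<in>P'. snd p - fst p) = (t' - s') + (\<Sum>p\<in>P - M. snd p - fst p)"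
    using notin fP P'_def by auto
  also have "(\<Sum>p\<in>P - M. snd p - fst p) = (\<Sum>p\<in>P. snd p - fst p) - (\<Sum>p\<in>M. snd p - fst p)"
    using sum_diff[OF fP MP] by auto
  finally have sP': "(\<Sum>p\<in>P'. snd p - fst p) \<le> 2 * real (Suc m) * R + (\<Sum>i<Suc m. y i - x i)"
    using lennew sP a_def b_def by (simp add: algebra_simps)
  have pP': "\<forall>p\<in>P'. \<forall>q\<in>P'. p \<noteq> q \<longrightarrow> sepR R p q"
    using pP sepnew unfolding P'_def by (auto simp: sepR_def)
  have uP': "(\<Union>i<Suc m. {x i..y i}) \<subseteq> (\<Union>p\<in>P'. {fst p..snd p})"
  proof
    fix z assume "z \<in> (\<Union>i<Suc m. {x i..y i})"
    then obtain i where i: "i < Suc m" "z \<in> {x i..y i}" by auto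
    show "z \<in> (\<Union>p\<in>P'. {fst p..snd p})"
    proof (cases "i = m")
      case True
      then have "z \<in> {s'..t'}" using i s'a t'b a_def b_def by auto
      then show ?thesis unfolding P'_def by auto
    next
      case False
      then have "i < m" using i by auto
      then have "z \<in> (\<Union>i<m. {x i..y i})" using i by blast
      then obtain p where p: "p \<in> P" "z \<in> {fst p..snd p}" using uP by blast
      show ?thesis
      proof (cases "p \<in> M")
        case True
        then have "s' \<le> fst p" "snd p \<le> t'" using s'M t'M by auto
        then have "z \<in> {s'..t'}" using p(2) by auto
        then show ?thesis unfolding P'_def by auto
      next
        case False
        then show ?thesis using p unfolding P'_def by auto
      qed
    qed
  qed
  show ?case using fP' cP' rP' sP' pP' uP' by blast
qed

theorem lemma5p6:
  fixes R :: real and m :: nat and x y :: "nat \<Rightarrow> real"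
  assumes "R > 0" and "\<forall>i<m. x i \<le> y i"
  shows "\<exists>m' s t. m' \<le> m \<and>
           (\<forall>i<m'. s i \<in> x ` {..<m} \<and> t i \<in> y ` {..<m} \<and> s i \<le> t i) \<and>
           (\<Sum>i<m'. \<bar>t i - s i\<bar>) \<le> 2 * real m * R + (\<Sum>i<m. \<bar>y i - x i\<bar>) \<and>
           (\<forall>i<m'. \<forall>j<m'. i \<noteq> j \<longrightarrow> setdist {s i..t i} {s j..t j} \<ge> R) \<and>
           (\<Union>i<m. {x i..y i}) \<subseteq> (\<Union>i<m'. {s i..t i})"
proof -
  obtain P where fP: "finite P" and cP: "card P \<le> m"
    and rP: "\<forall>p\<in>P. fst p \<in> x ` {..<m} \<and> snd p \<in> y ` {..<m} \<and> fst p \<le> snd p"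
    and sP: "(\<Sum>p\<in>P. snd p - fst p) \<le> 2 * real m * R + (\<Sum>i<m. y i - x i)"
    and pP: "\<forall>p\<in>P. \<forall>q\<in>P. p \<noteq> q \<longrightarrow> sepR R p q"
    and uP: "(\<Union>i<m. {x i..y i}) \<subseteq> (\<Union>p\<in>P. {fst p..snd p})"
    using main[OF assms] by blast
  obtain h where h: "bij_betw h {..<card P} P"
    using ex_bij_betw_nat_finite[OF fP] atLeast0LessThan by metis
  have hin: "\<And>i. i < card P \<Longrightarrow> h i \<in> P" using h bij_betwE by fastforce
  have hinj: "\<And>i j. i < card P \<Longrightarrow> j < card P \<Longrightarrow> i \<noteq> j \<Longrightarrow> h i \<noteq> h j"
    using h unfolding bij_betw_def inj_on_def by blast
  have abs1: "(\<Sum>i<m. \<bar>y i - x i\<bar>) = (\<Sum>i<m. y i - x i)"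
    using assms(2) by (intro sum.cong) auto
  have "(\<Sum>i<card P. \<bar>snd (h i) - fst (h i)\<bar>) = (\<Sum>i<card P. snd (h i) - fst (h i))"
    using hin rP by (intro sum.cong) auto
  also have "\<dots> = (\<Sum>p\<in>P. snd p - fst p)"
    using sum.reindex_bij_betw[OF h, of "\<lambda>p. snd p - fst p"] by simp
  finally have sumeq: "(\<Sum>i<card P. \<bar>snd (h i) - fst (h i)\<bar>) = (\<Sum>p\<in>P. snd p - fst p)" .
  have un: "(\<Union>i<card P. {fst (h i)..snd (h i)}) = (\<Union>p\<in>P. {fst p..snd p})"
  proof -
    have "(\<Union>i<card P. {fst (h i)..snd (h i)}) = (\<Union>p\<in>h ` {..<card P}. {fst p..snd p})"
      by simp
    then show ?thesis using bij_betw_imp_surj_on[OF h] by simp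
  qed
  show ?thesis
  proof (intro exI conjI)
    show "card P \<le> m" by fact
    show "\<forall>i<card P. fst (h i) \<in> x ` {..<m} \<and> snd (h i) \<in> y ` {..<m} \<and> fst (h i) \<le> snd (h i)"
      using hin rP by auto
    show "(\<Sum>i<card P. \<bar>snd (h i) - fst (h i)\<bar>) \<le> 2 * real m * R + (\<Sum>i<m. \<bar>y i - x i\<bar>)"
      using sumeq sP abs1 by simp
    show "\<forall>i<card P. \<forall>j<card P. i \<noteq> j \<longrightarrow> R \<le> setdist {fst (h i)..snd (h i)} {fst (h j)..snd (h j)}"
    proof (intro allI impI)
      fix i j assume ij: "i < card P" "j < card P" "i \<noteq> j"
      have "sepR R (h i) (h j)" using pP hin hinj ij by blast
      then show "R \<le> setdist {fst (h i)..snd (h i)} {fst (h j)..snd (h j)}"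
        using rP hin ij by (intro setdist_iv) (auto simp: sepR_def)
    qed
    show "(\<Union>i<m. {x i..y i}) \<subseteq> (\<Union>i<card P. {fst (h i)..snd (h i)})"
      using uP un by simp
  qed
qed

end
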